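(* Let $G$ be a tree. Then the independence complex $\Delta(G)$ is sortable if and only if $G$ is a path graph.
   Context: The independence complex $\Delta(G)$ is the simplicial complex of all independent sets of $G$. For finite $F,G\subset\mathbb{N}$ with $|F|=r,|G|=s$, write $\mathbf{x}^F\mathbf{x}^G=x_{i_1}\cdots x_{i_{r+s}}$ with $i_1\le\cdots\le i_{r+s}$ (where $\mathbf{x}^F=\prod_{i\in F}x_i$) and set $\mathrm{sort}(F,G)=(\{i_k:k\text{ odd}\},\{i_k:k\text{ even}\})$. A simplicial complex $\Delta$ with $V(\Delta)\subset\mathbb{N}$ is sortable with respect to the given labeling if $\mathrm{sort}(F,G)\in\Delta\times\Delta$ for all $F,G\in\Delta$; $\Delta$ is sortable if it is sortable with respect to some labeling of its vertices by distinct integers. *)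

theory Defs
  imports Main "HOL-Library.Multiset"
begin

definition simple_graph :: "'a set \<Rightarrow> ('a \<Rightarrow> 'a \<Rightarrow> bool) \<Rightarrow> bool" where
  "simple_graph V E \<longleftrightarrow> finite V \<and> (\<forall>u v. E u v \<longrightarrow> u \<in> V \<and> v \<in> V)
     \<and> (\<forall>u v. E u v \<longrightarrow> E v u) \<and> (\<forall>v. \<not> E v v)"

definition is_walk :: "'a set \<Rightarrow> ('a \<Rightarrow> 'a \<Rightarrow> bool) \<Rightarrow> 'a list \<Rightarrow> bool" where
  "is_walk V E ws \<longleftrightarrow> ws \<noteq> [] \<and> set ws \<subseteq> V \<and> (\<forall>i. Suc i < length ws \<longrightarrow> E (ws ! i) (ws ! Suc i))"

definition connected_graph :: "'a set \<Rightarrow> ('a \<Rightarrow> 'a \<Rightarrow> bool) \<Rightarrow> bool" where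
  "connected_graph V E \<longleftrightarrow> (\<forall>u\<in>V. \<forall>v\<in>V. \<exists>ws. is_walk V E ws \<and> hd ws = u \<and> last ws = v)"

definition is_cycle :: "'a set \<Rightarrow> ('a \<Rightarrow> 'a \<Rightarrow> bool) \<Rightarrow> 'a list \<Rightarrow> bool" where
  "is_cycle V E cs \<longleftrightarrow> length cs \<ge> 3 \<and> distinct cs \<and> is_walk V E cs \<and> E (last cs) (hd cs)"

definition is_tree :: "'a set \<Rightarrow> ('a \<Rightarrow> 'a \<Rightarrow> bool) \<Rightarrow> bool" where
  "is_tree V E \<longleftrightarrow> simple_graph V E \<and> V \<noteq> {} \<and> connected_graph V E \<and> (\<nexists>cs. is_cycle V E cs)"

definition is_path_graph :: "'a set \<Rightarrow> ('a \<Rightarrow> 'a \<Rightarrow> bool) \<Rightarrow> bool" where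
  "is_path_graph V E \<longleftrightarrow> (\<exists>vs. distinct vs \<and> set vs = V \<and>
     (\<forall>u v. E u v \<longleftrightarrow> (\<exists>i. Suc i < length vs \<and>
        ((u = vs ! i \<and> v = vs ! Suc i) \<or> (v = vs ! i \<and> u = vs ! Suc i)))))"

definition independent_set :: "'a set \<Rightarrow> ('a \<Rightarrow> 'a \<Rightarrow> bool) \<Rightarrow> 'a set \<Rightarrow> bool" where
  "independent_set V E S \<longleftrightarrow> S \<subseteq> V \<and> (\<forall>u\<in>S. \<forall>v\<in>S. \<not> E u v)"

definition independence_complex :: "'a set \<Rightarrow> ('a \<Rightarrow> 'a \<Rightarrow> bool) \<Rightarrow> 'a set set" where
  "independence_complex V E = {S. independent_set V E S}"

text \<open>For finite F, G of naturals: sort the multiset union i_1 \<le> ... \<le> i_{r+s};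
first component collects the entries at odd positions (1-indexed), second at
even positions.\<close>
definition sort_pair :: "nat set \<Rightarrow> nat set \<Rightarrow> nat set \<times> nat set" where
  "sort_pair F G = (let xs = sorted_list_of_multiset (mset_set F + mset_set G) in
     (set (nths xs {i. even i}), set (nths xs {i. odd i})))"

definition sortable_wrt_labeling :: "nat set set \<Rightarrow> bool" where
  "sortable_wrt_labeling D \<longleftrightarrow> (\<forall>F\<in>D. \<forall>G\<in>D. sort_pair F G \<in> D \<times> D)"

definition complex_vertices :: "'a set set \<Rightarrow> 'a set" where
  "complex_vertices D = \<Union>D"

definition sortable :: "'a set set \<Rightarrow> bool" where
  "sortable D \<longleftrightarrow> (\<exists>l :: 'a \<Rightarrow> nat. inj_on l (complex_vertices D)
      \<and> sortable_wrt_labeling ((\<lambda>F. l ` F) ` D))"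

end

theory Submission
  imports Defs
begin

definition sparse :: "nat set \<Rightarrow> bool" where
  "sparse T \<longleftrightarrow> (\<forall>i\<in>T. Suc i \<notin> T)"

lemma sorted_adj_pos:
  assumes s: "sorted xs"
    and cnt: "\<And>k. length (filter (\<lambda>x. x = k \<or> x = Suc k) xs) \<le> 2"
    and ij: "i < length xs" "j < length xs" "xs ! j = Suc (xs ! i)"
  shows "j = Suc i"
proof -
  define k where "k = xs ! i"
  have "i < j"
  proof (rule ccontr)
    assume "\<not> i < j" then have "j \<le> i" by simp
    have "xs ! j \<le> xs ! i" using sorted_nth_mono[OF s \<open>j \<le> i\<close> ij(1)] .
    then show False using ij by simp
  qed
  show ?thesis
  proof (rule ccontr)
    assume "j \<noteq> Suc i"
    with \<open>i < j\<close> have "Suc (Suc i) \<le> j" by simp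
    have sub: "{i..j} \<subseteq> {t. t < length xs \<and> (xs ! t = k \<or> xs ! t = Suc k)}"
    proof
      fix t assume "t \<in> {i..j}"
      then have t: "i \<le> t" "t \<le> j" by auto
      have "xs ! i \<le> xs ! t" using sorted_nth_mono[OF s t(1)] t ij by simp
      moreover have "xs ! t \<le> xs ! j" using sorted_nth_mono[OF s t(2)] t ij by simp
      ultimately show "t \<in> {t. t < length xs \<and> (xs ! t = k \<or> xs ! t = Suc k)}"
        using t ij k_def by auto
    qed
    have "card {i..j} \<le> card {t. t < length xs \<and> (xs ! t = k \<or> xs ! t = Suc k)}"
      by (rule card_mono[OF _ sub]) auto
    also have "\<dots> = length (filter (\<lambda>x. x = k \<or> x = Suc k) xs)"
      by (simp add: length_filter_conv_card)
    also have "\<dots> \<le> 2" by (rule cnt)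
    finally show False using \<open>Suc (Suc i) \<le> j\<close> by simp
  qed
qed

lemma sparse_card_le1:
  assumes "finite F" "sparse F"
  shows "card {x\<in>F. x = k \<or> x = Suc k} \<le> 1"
proof -
  have "{x\<in>F. x = k \<or> x = Suc k} \<subseteq> {k} \<or> {x\<in>F. x = k \<or> x = Suc k} \<subseteq> {Suc k}"
    using assms(2) unfolding sparse_def by auto
  then show ?thesis
  proof
    assume "{x\<in>F. x = k \<or> x = Suc k} \<subseteq> {k}"
    then show ?thesis using card_mono[of "{k}" "{x\<in>F. x = k \<or> x = Suc k}"] by simp
  next
    assume "{x\<in>F. x = k \<or> x = Suc k} \<subseteq> {Suc k}"
    then show ?thesis using card_mono[of "{Suc k}" "{x\<in>F. x = k \<or> x = Suc k}"] by simp
  qed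
qed

lemma sort_pair_sparse:
  assumes "finite F" "finite G" "sparse F" "sparse G"
  shows "sparse (fst (sort_pair F G)) \<and> sparse (snd (sort_pair F G))
     \<and> fst (sort_pair F G) \<subseteq> F \<union> G \<and> snd (sort_pair F G) \<subseteq> F \<union> G"
proof -
  define xs where "xs = sorted_list_of_multiset (mset_set F + mset_set G)"
  have s: "sorted xs" unfolding xs_def by simp
  have m: "mset xs = mset_set F + mset_set G" unfolding xs_def by simp
  have setxs: "set xs = F \<union> G"
    by (metis m assms(1,2) finite_set_mset_mset_set set_mset_mset set_mset_union)
  have cnt: "length (filter (\<lambda>x. x = k \<or> x = Suc k) xs) \<le> 2" for k
  proof -
    have "length (filter (\<lambda>x. x = k \<or> x = Suc k) xs)
        = size (filter_mset (\<lambda>x. x = k \<or> x = Suc k) (mset xs))"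
      by (metis mset_filter size_mset)
    also have "\<dots> = card {x\<in>F. x = k \<or> x = Suc k} + card {x\<in>G. x = k \<or> x = Suc k}"
      using assms by (simp add: m filter_mset_mset_set)
    also have "\<dots> \<le> 2" using sparse_card_le1[OF assms(1,3), of k] sparse_card_le1[OF assms(2,4), of k]
      by linarith
    finally show ?thesis .
  qed
  have key: "sparse (set (nths xs {i. P i}))" if P: "\<And>i. P i \<Longrightarrow> \<not> P (Suc i)" for P
    unfolding sparse_def set_nths
  proof (clarsimp)
    fix i j assume i: "i < length xs" "P i" and j: "j < length xs" "P j" "Suc (xs ! i) = xs ! j"
    then have "j = Suc i" using sorted_adj_pos[OF s cnt, of i j] by simp
    then show False using P i j by blast
  qed
  have "sort_pair F G = (set (nths xs {i. even i}), set (nths xs {i. odd i}))"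
    unfolding sort_pair_def xs_def by (simp add: Let_def)
  moreover have "sparse (set (nths xs {i. even i}))" by (rule key) simp
  moreover have "sparse (set (nths xs {i. odd i}))" by (rule key) simp
  ultimately show ?thesis using set_nths_subset[of xs] setxs by auto
qed


lemma path_sortable:
  assumes d: "distinct vs" and sv: "set vs = V"
    and e: "\<forall>u v. E u v \<longleftrightarrow> (\<exists>i. Suc i < length vs \<and>
        ((u = vs ! i \<and> v = vs ! Suc i) \<or> (v = vs ! i \<and> u = vs ! Suc i)))"
  shows "sortable (independence_complex V E)"
proof -
  define n where "n = length vs"
  define l where "l = the_inv_into {..<n} ((!) vs)"
  have bij: "bij_betw ((!) vs) {..<n} V" using bij_betw_nth[OF d] sv n_def by simp
  have inj: "inj_on ((!) vs) {..<n}" using bij bij_betw_imp_inj_on by blast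
  have lnth: "l (vs ! i) = i" if "i < n" for i
    unfolding l_def using the_inv_into_f_f[OF inj] that by simp
  have nthl: "vs ! (l v) = v" if "v \<in> V" for v
    unfolding l_def using f_the_inv_into_f_bij_betw[OF bij that] .
  have lV: "l v < n" if "v \<in> V" for v
    unfolding l_def using the_inv_into_into[OF inj, of v "{..<n}"] bij that
    by (simp add: bij_betw_def)
  let ?D = "independence_complex V E"
  have cv: "complex_vertices ?D \<subseteq> V"
    unfolding complex_vertices_def independence_complex_def independent_set_def by auto
  have injl: "inj_on l V"
    by (metis inj_onI nthl)
  have img: "(\<lambda>F. l ` F) ` ?D = {T. T \<subseteq> {..<n} \<and> sparse T}"
  proof (intro equalityI subsetI)
    fix T assume "T \<in> (\<lambda>F. l ` F) ` ?D"
    then obtain S where S: "independent_set V E S" and T: "T = l ` S"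
      unfolding independence_complex_def by auto
    have SV: "S \<subseteq> V" and ind: "\<forall>u\<in>S. \<forall>v\<in>S. \<not> E u v"
      using S unfolding independent_set_def by auto
    have "T \<subseteq> {..<n}" using T SV lV by auto
    moreover have "sparse T" unfolding sparse_def
    proof (intro ballI notI)
      fix i assume "i \<in> T" "Suc i \<in> T"
      then obtain u w where u: "u \<in> S" "i = l u" and w: "w \<in> S" "Suc i = l w" using T by auto
      have "Suc i < n" using w SV lV by auto
      moreover have "u = vs ! i" "w = vs ! Suc i" using u w SV nthl by auto
      ultimately have "E u w" using e n_def by blast
      then show False using ind u w by blast
    qed
    ultimately show "T \<in> {T. T \<subseteq> {..<n} \<and> sparse T}" by simp
  next
    fix T assume "T \<in> {T. T \<subseteq> {..<n} \<and> sparse T}"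
    then have Tn: "T \<subseteq> {..<n}" and sp: "sparse T" by auto
    define S where "S = (!) vs ` T"
    have "l ` S = T" unfolding S_def image_image using Tn lnth
      by (smt (verit, ccfv_SIG) image_cong image_ident lessThan_iff subset_iff)
    moreover have "independent_set V E S"
      unfolding independent_set_def
    proof (intro conjI ballI notI)
      show "S \<subseteq> V" using S_def Tn sv n_def by auto
    next
      fix u w assume "u \<in> S" "w \<in> S" "E u w"
      then obtain a b where a: "a \<in> T" "u = vs ! a" and b: "b \<in> T" "w = vs ! b"
        unfolding S_def by auto
      from \<open>E u w\<close> e obtain i where i: "Suc i < length vs"
        "(u = vs ! i \<and> w = vs ! Suc i) \<or> (w = vs ! i \<and> u = vs ! Suc i)" by blast
      have an: "a < length vs" "b < length vs" using a b Tn n_def by auto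
      from i(2) show False
      proof
        assume "u = vs ! i \<and> w = vs ! Suc i"
        then have "a = i" "b = Suc i" using a b an i(1) d nth_eq_iff_index_eq by fastforce+
        then show False using sp a b unfolding sparse_def by blast
      next
        assume "w = vs ! i \<and> u = vs ! Suc i"
        then have "b = i" "a = Suc i" using a b an i(1) d nth_eq_iff_index_eq by fastforce+
        then show False using sp a b unfolding sparse_def by blast
      qed
    qed
    ultimately show "T \<in> (\<lambda>F. l ` F) ` ?D" unfolding independence_complex_def by blast
  qed
  have "sortable_wrt_labeling ((\<lambda>F. l ` F) ` ?D)"
    unfolding sortable_wrt_labeling_def img
  proof (intro ballI)
    fix F G assume F: "F \<in> {T. T \<subseteq> {..<n} \<and> sparse T}" and G: "G \<in> {T. T \<subseteq> {..<n} \<and> sparse T}"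
    have "finite F" "finite G" using F G finite_subset by auto
    from sort_pair_sparse[OF this] F G
    show "sort_pair F G \<in> {T. T \<subseteq> {..<n} \<and> sparse T} \<times> {T. T \<subseteq> {..<n} \<and> sparse T}"
      by (cases "sort_pair F G") auto
  qed
  then show ?thesis unfolding sortable_def using injl cv inj_on_subset by blast
qed

lemma four_comp:
  assumes "length xs = 4" "distinct xs" "x \<in> set xs"
  shows "\<exists>y. y \<in> set xs \<and> y \<noteq> x \<and>
     ((x \<in> set (nths xs {i. even i}) \<and> y \<in> set (nths xs {i. even i})) \<or>
      (x \<in> set (nths xs {i. odd i}) \<and> y \<in> set (nths xs {i. odd i})))"
proof -
  obtain t where t: "t < 4" "xs ! t = x" using assms by (metis in_set_conv_nth)
  have ne: "xs ! i \<noteq> xs ! j" if "i < 4" "j < 4" "i \<noteq> j" for i j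
    using assms(1,2) that nth_eq_iff_index_eq by fastforce
  have t4: "t = 0 \<or> t = 1 \<or> t = 2 \<or> t = 3" using t by auto
  have mem: "xs ! i \<in> set (nths xs {i. P i})" if "i < 4" "P i" for i P
    unfolding set_nths using that assms(1) by auto
  have inset: "xs ! i \<in> set xs" if "i < 4" for i using that assms(1) by simp
  from t4 show ?thesis
  proof (elim disjE)
    assume "t = 0" then show ?thesis
      using t ne[of 2 0] mem[of 0 even] mem[of 2 even] inset[of 2] by (intro exI[of _ "xs ! 2"]) auto
  next
    assume "t = 1" then show ?thesis
      using t ne[of 3 1] mem[of 1 odd] mem[of 3 odd] inset[of 3] by (intro exI[of _ "xs ! 3"]) auto
  next
    assume "t = 2" then show ?thesis
      using t ne[of 0 2] mem[of 0 even] mem[of 2 even] inset[of 0] by (intro exI[of _ "xs ! 0"]) auto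
  next
    assume "t = 3" then show ?thesis
      using t ne[of 1 3] mem[of 1 odd] mem[of 3 odd] inset[of 1] by (intro exI[of _ "xs ! 1"]) auto
  qed
qed

lemma claw_not_sortable:
  assumes tree: "is_tree V E" and vV: "v \<in> V"
    and ea: "E v a" and eb: "E v b" and ec: "E v c"
    and ab: "a \<noteq> b" and ac: "a \<noteq> c" and bc: "b \<noteq> c"
  shows "\<not> sortable (independence_complex V E)"
proof
  assume so: "sortable (independence_complex V E)"
  have sg: "simple_graph V E" and nocyc: "\<nexists>cs. is_cycle V E cs"
    using tree unfolding is_tree_def by auto
  have EV: "\<And>u w. E u w \<Longrightarrow> u \<in> V \<and> w \<in> V" and sym: "\<And>u w. E u w \<Longrightarrow> E w u"
    and irr: "\<And>u. \<not> E u u" using sg unfolding simple_graph_def by auto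
  have notri: "\<not> E x y" if "E v x" "E v y" for x y
  proof
    assume xy: "E x y"
    have "x \<noteq> y" using xy irr by auto
    moreover have "v \<noteq> x" "v \<noteq> y" using that irr by auto
    moreover have "is_walk V E [v, x, y]" unfolding is_walk_def
    proof (intro conjI allI impI)
      show "set [v, x, y] \<subseteq> V" using that EV by auto
    next
      fix i assume "Suc i < length [v, x, y]"
      then have "i = 0 \<or> i = 1" by auto
      then show "E ([v, x, y] ! i) ([v, x, y] ! Suc i)" using that xy by auto
    qed simp
    ultimately have "is_cycle V E [v, x, y]"
      unfolding is_cycle_def using sym[OF that(2)] by simp
    then show False using nocyc by blast
  qed
  let ?D = "independence_complex V E"
  obtain l where injl: "inj_on l (complex_vertices ?D)"
    and sw: "sortable_wrt_labeling ((\<lambda>F. l ` F) ` ?D)"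
    using so unfolding sortable_def by blast
  have single: "{x} \<in> ?D" if "x \<in> V" for x
    using that irr unfolding independence_complex_def independent_set_def by auto
  have Vcv: "V \<subseteq> complex_vertices ?D"
    unfolding complex_vertices_def using single by blast
  have injV: "inj_on l V" using injl Vcv inj_on_subset by blast
  have aV: "a \<in> V" "b \<in> V" "c \<in> V" using EV ea eb ec by auto
  have vabc: "v \<noteq> a" "v \<noteq> b" "v \<noteq> c" using irr ea eb ec by auto
  have abcD: "{a, b, c} \<in> ?D"
    unfolding independence_complex_def independent_set_def
    using aV notri ea eb ec irr by auto
  define p where "p = l v"
  define Q where "Q = {l a, l b, l c}"
  have pQ: "p \<notin> Q" unfolding p_def Q_def using injV vV aV vabc
    by (auto dest: inj_onD)
  have "l a \<noteq> l b" "l a \<noteq> l c" "l b \<noteq> l c" using injV aV ab ac bc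
    by (auto dest: inj_onD)
  then have cardQ: "card Q = 3" unfolding Q_def by simp
  have "l ` {v} \<in> (\<lambda>F. l ` F) ` ?D" using single[OF vV] by (rule imageI)
  then have pD: "{p} \<in> (\<lambda>F. l ` F) ` ?D" unfolding p_def by simp
  have "l ` {a, b, c} \<in> (\<lambda>F. l ` F) ` ?D" using abcD by (rule imageI)
  then have QD: "Q \<in> (\<lambda>F. l ` F) ` ?D" unfolding Q_def by simp
  have sp: "sort_pair {p} Q \<in> ((\<lambda>F. l ` F) ` ?D) \<times> ((\<lambda>F. l ` F) ` ?D)"
    using sw pD QD unfolding sortable_wrt_labeling_def by blast
  define xs where "xs = sorted_list_of_set (insert p Q)"
  have fQ: "finite Q" unfolding Q_def by simp
  have "mset_set {p} + mset_set Q = mset_set ({p} \<union> Q)"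
    using mset_set_Union[of "{p}" Q] fQ pQ by simp
  then have spx: "sort_pair {p} Q = (set (nths xs {i. even i}), set (nths xs {i. odd i}))"
    unfolding sort_pair_def xs_def by (simp add: Let_def sorted_list_of_mset_set)
  have lxs: "length xs = 4" unfolding xs_def length_sorted_list_of_set
    using fQ pQ cardQ by (simp add: card_insert_disjoint)
  have dxs: "distinct xs" unfolding xs_def by (rule distinct_sorted_list_of_set)
  have sxs: "set xs = insert p Q" unfolding xs_def using fQ by (simp only: set_sorted_list_of_set finite_insert)
  obtain y where y: "y \<in> set xs" "y \<noteq> p" and C:
    "\<exists>C\<in>{set (nths xs {i. even i}), set (nths xs {i. odd i})}. p \<in> C \<and> y \<in> C"
    using four_comp[OF lxs dxs, of p] sxs by auto
  have "set (nths xs {i. even i}) \<in> (\<lambda>F. l ` F) ` ?D"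
    "set (nths xs {i. odd i}) \<in> (\<lambda>F. l ` F) ` ?D"
    using sp unfolding spx mem_Times_iff by simp_all
  then obtain C where CD: "C \<in> (\<lambda>F. l ` F) ` ?D" and pC: "p \<in> C" and yC: "y \<in> C"
    using C by blast
  obtain S where S: "independent_set V E S" and CS: "C = l ` S"
    using CD unfolding independence_complex_def by auto
  have SV: "S \<subseteq> V" and ind: "\<forall>u\<in>S. \<forall>w\<in>S. \<not> E u w" using S unfolding independent_set_def by auto
  obtain w where w: "w \<in> S" "l w = l v" using pC CS p_def by auto
  have "w = v" using w SV vV injV by (auto dest: inj_onD)
  have yQ: "y \<in> Q" using y sxs by auto
  then obtain x where x: "x \<in> {a, b, c}" "y = l x" unfolding Q_def by auto
  obtain w' where w': "w' \<in> S" "l w' = l x" using yC CS x by auto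
  have "w' = x" using w' x SV aV injV by (auto dest: inj_onD)
  have "E v x" using x ea eb ec by auto
  then show False using ind w \<open>w = v\<close> w' \<open>w' = x\<close> by blast
qed

lemma nodeg3_path:
  assumes tree: "is_tree V E"
    and nodeg: "\<And>v a b c. v \<in> V \<Longrightarrow> E v a \<Longrightarrow> E v b \<Longrightarrow> E v c \<Longrightarrow> a = b \<or> a = c \<or> b = c"
  shows "is_path_graph V E"
proof -
  have sg: "simple_graph V E" and nocyc: "\<nexists>cs. is_cycle V E cs" and conn: "connected_graph V E"
    and Vne: "V \<noteq> {}"
    using tree unfolding is_tree_def by auto
  have fin: "finite V" and EV: "\<And>u w. E u w \<Longrightarrow> u \<in> V \<and> w \<in> V" and sym: "\<And>u w. E u w \<Longrightarrow> E w u"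
    and irr: "\<And>u. \<not> E u u" using sg unfolding simple_graph_def by auto
  define P where "P ws \<longleftrightarrow> distinct ws \<and> set ws \<subseteq> V \<and> ws \<noteq> [] \<and>
      (\<forall>i. Suc i < length ws \<longrightarrow> E (ws ! i) (ws ! Suc i))" for ws
  obtain v0 where "v0 \<in> V" using Vne by blast
  then have "P [v0]" unfolding P_def by simp
  moreover have "\<forall>ws. P ws \<longrightarrow> length ws < card V + 1"
  proof (intro allI impI)
    fix ws assume "P ws"
    then have d': "distinct ws" "set ws \<subseteq> V" unfolding P_def by auto
    have "length ws = card (set ws)" using d'(1) by (simp add: distinct_card)
    moreover have "card (set ws) \<le> card V" using d'(2) by (rule card_mono[OF fin])
    ultimately show "length ws < card V + 1" by simp
  qed
  ultimately have "\<exists>x. P x \<and> (\<forall>y. P y \<longrightarrow> length y \<le> length x)"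
    by (rule Lattices_Big.ex_has_greatest_nat)
  then obtain ws where Pws: "P ws" and maxl: "\<And>ys. P ys \<Longrightarrow> length ys \<le> length ws"
    by blast
  have d: "distinct ws" and wsV: "set ws \<subseteq> V" and wne: "ws \<noteq> []"
    and we: "\<And>i. Suc i < length ws \<Longrightarrow> E (ws ! i) (ws ! Suc i)"
    using Pws unfolding P_def by auto
  have chord: "j = Suc i" if ij: "i < j" "j < length ws" and e: "E (ws ! i) (ws ! j)" for i j
  proof (rule ccontr)
    assume "j \<noteq> Suc i"
    define m where "m = j - i"
    have jm: "j = i + m" "m \<ge> 2" using ij \<open>j \<noteq> Suc i\<close> unfolding m_def by auto
    define cs where "cs = map (\<lambda>k. ws ! (i + k)) [0..<Suc m]"
    have lcs: "length cs = Suc m" unfolding cs_def by simp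
    have csn: "cs ! k = ws ! (i + k)" if "k < Suc m" for k
      unfolding cs_def using that by (simp del: upt_Suc)
    have inj: "inj_on (\<lambda>k. ws ! (i + k)) {0..<Suc m}"
    proof (rule inj_onI)
      fix x y assume "x \<in> {0..<Suc m}" "y \<in> {0..<Suc m}" "ws ! (i + x) = ws ! (i + y)"
      then show "x = y" using d ij jm nth_eq_iff_index_eq[of ws "i + x" "i + y"] by auto
    qed
    have "distinct cs" unfolding cs_def distinct_map using inj by (simp del: upt_Suc)
    moreover have "length cs \<ge> 3" using lcs jm by simp
    moreover have "cs \<noteq> []" using lcs by auto
    moreover have "set cs \<subseteq> V" unfolding cs_def using wsV ij jm by auto
    moreover have "E (cs ! k) (cs ! Suc k)" if "Suc k < length cs" for k
      using that lcs csn[of k] csn[of "Suc k"] we[of "i + k"] ij jm by simp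
    moreover have "hd cs = ws ! i" using csn[of 0] \<open>cs \<noteq> []\<close> by (simp add: hd_conv_nth)
    moreover have "last cs = ws ! j" using csn[of m] lcs jm \<open>cs \<noteq> []\<close>
      by (simp add: last_conv_nth)
    ultimately have "is_cycle V E cs" unfolding is_cycle_def is_walk_def using sym[OF e]
      by (intro conjI allI impI) simp_all
    then show False using nocyc by blast
  qed
  have allV: "V \<subseteq> set ws"
  proof
    fix u assume uV: "u \<in> V"
    show "u \<in> set ws"
    proof (rule ccontr)
      assume un: "u \<notin> set ws"
      have "hd ws \<in> V" using wsV wne by auto
      then obtain p where pw: "is_walk V E p" and hp: "hd p = hd ws" and lp: "last p = u"
        using conn uV unfolding connected_graph_def by blast
      have pne: "p \<noteq> []" and pV: "set p \<subseteq> V"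
        and pe: "\<And>i. Suc i < length p \<Longrightarrow> E (p ! i) (p ! Suc i)"
        using pw unfolding is_walk_def by auto
      define Q where "Q k \<longleftrightarrow> k < length p \<and> p ! k \<notin> set ws" for k
      have "Q (length p - 1)" unfolding Q_def using lp pne un by (simp add: last_conv_nth)
      then have Qk: "Q (LEAST k. Q k)" by (rule LeastI)
      define k where "k = (LEAST k. Q k)"
      have "k \<noteq> 0"
      proof
        assume "k = 0"
        then have "p ! 0 \<notin> set ws" using Qk k_def Q_def by simp
        moreover have "p ! 0 = hd ws" using hp pne by (simp add: hd_conv_nth)
        ultimately show False using wne by simp
      qed
      then obtain k0 where kk: "k = Suc k0" by (cases k) auto
      have "\<not> Q k0" using not_less_Least[of k0 Q] kk k_def by simp
      moreover have klen: "k < length p" and xn: "p ! k \<notin> set ws" using Qk k_def Q_def by auto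
      ultimately have "p ! k0 \<in> set ws" using kk Q_def by simp
      then obtain i where i: "i < length ws" "ws ! i = p ! k0" by (metis in_set_conv_nth)
      define x where "x = p ! k"
      have exw: "E (ws ! i) x" using pe[of k0] kk klen i x_def by simp
      have xV: "x \<in> V" using EV exw by blast
      have xn': "x \<notin> set ws" using xn x_def by simp
      show False
      proof (cases "i = 0")
        case True
        have "P (x # ws)" unfolding P_def
        proof (intro conjI allI impI)
          fix j assume j: "Suc j < length (x # ws)"
          show "E ((x # ws) ! j) ((x # ws) ! Suc j)"
          proof (cases j)
            case 0 then show ?thesis using sym[OF exw] True by simp
          next
            case (Suc j') then show ?thesis using we[of j'] j by simp
          qed
        qed (use d xn' wsV xV in auto)
        then show False using maxl by force
      next
        case i0: False
        show False
        proof (cases "Suc i = length ws")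
          case True
          have "P (ws @ [x])" unfolding P_def
          proof (intro conjI allI impI)
            fix j assume j: "Suc j < length (ws @ [x])"
            show "E ((ws @ [x]) ! j) ((ws @ [x]) ! Suc j)"
            proof (cases "Suc j < length ws")
              case True then show ?thesis using we[of j] by (simp add: nth_append)
            next
              case False
              then have "j = i" using j True by simp
              then show ?thesis using exw True by (simp add: nth_append)
            qed
          qed (use d xn' wsV xV in auto)
          then show False using maxl by force
        next
          case False
          then have si: "Suc i < length ws" using i by simp
          obtain i0 where ii: "i = Suc i0" using i0 by (cases i) auto
          have e1: "E (ws ! i) (ws ! i0)" using sym[OF we[of i0]] ii si by simp
          have e2: "E (ws ! i) (ws ! Suc i)" using we si by simp
          have "ws ! i0 \<noteq> ws ! Suc i" using d si ii nth_eq_iff_index_eq by fastforce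
          moreover have "ws ! i0 \<noteq> x" "ws ! Suc i \<noteq> x" using xn' si ii by auto
          moreover have "ws ! i \<in> V" using i(1) wsV nth_mem by blast
          ultimately show False using nodeg[OF _ e1 e2 exw] by blast
        qed
      qed
    qed
  qed
  have sV: "set ws = V" using allV wsV by auto
  show ?thesis unfolding is_path_graph_def
  proof (intro exI[of _ ws] conjI allI iffI)
    fix u w assume e: "E u w"
    then have "u \<in> set ws" "w \<in> set ws" using EV sV by auto
    then obtain i j where i: "i < length ws" "u = ws ! i" and j: "j < length ws" "w = ws ! j"
      by (metis in_set_conv_nth)
    have "i \<noteq> j" using e irr i j by auto
    then consider "i < j" | "j < i" by linarith
    then show "\<exists>i. Suc i < length ws \<and> (u = ws ! i \<and> w = ws ! Suc i \<or> w = ws ! i \<and> u = ws ! Suc i)"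
    proof cases
      case 1
      then have "j = Suc i" using chord[of i j] j e i by blast
      then show ?thesis using i j by blast
    next
      case 2
      then have "i = Suc j" using chord[of j i] i sym[OF e] j by blast
      then show ?thesis using i j by blast
    qed
  next
    fix u w assume "\<exists>i. Suc i < length ws \<and> (u = ws ! i \<and> w = ws ! Suc i \<or> w = ws ! i \<and> u = ws ! Suc i)"
    then show "E u w" using we sym by blast
  qed (use d sV in auto)
qed

theorem corollary1p9:
  fixes V :: "'a set" and E :: "'a \<Rightarrow> 'a \<Rightarrow> bool"
  assumes "is_tree V E"
  shows "sortable (independence_complex V E) \<longleftrightarrow> is_path_graph V E"
proof
  assume so: "sortable (independence_complex V E)"
  show "is_path_graph V E"
  proof (rule nodeg3_path[OF assms])
    fix v a b c assume "v \<in> V" "E v a" "E v b" "E v c"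
    then show "a = b \<or> a = c \<or> b = c"
      using claw_not_sortable[OF assms] so by blast
  qed
next
  assume "is_path_graph V E"
  then obtain vs where "distinct vs" "set vs = V" "\<forall>u v. E u v \<longleftrightarrow> (\<exists>i. Suc i < length vs \<and>
        ((u = vs ! i \<and> v = vs ! Suc i) \<or> (v = vs ! i \<and> u = vs ! Suc i)))"
    unfolding is_path_graph_def by blast
  then show "sortable (independence_complex V E)" by (rule path_sortable)
qed

end
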